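(* Let $t \geq 1$ and $k \geq 1$ be integers, and let $\mathcal{F}$ be a finite family of finite sets with $\alpha(\mathcal{F}) \geq t$ and $\beta(\mathcal{F},t) = \frac{l(\mathcal{F},t)}{|\mathcal{F}|}$. Let $\mathcal{A}_1, \dots, \mathcal{A}_k$ be cross-$t$-intersecting sub-families of $\mathcal{F}$ such that $\sum_{i=1}^k |\mathcal{A}_i|$ is maximum among all $k$-tuples of cross-$t$-intersecting sub-families of $\mathcal{F}$. Then \[\sum_{i=1}^k |\mathcal{A}_i| = \begin{cases} |\mathcal{F}| & \text{if } k \leq \frac{|\mathcal{F}|}{l(\mathcal{F},t)};\\ k\, l(\mathcal{F},t) & \text{if } k \geq \frac{|\mathcal{F}|}{l(\mathcal{F},t)}.\end{cases}\] Moreover, (i) if $k < \frac{|\mathcal{F}|}{l(\mathcal{F},t)}$, then $\mathcal{A}_i = \mathcal{A}_i^{t,-}$ for all $i \in [k]$, and $\mathcal{A}_1, \dots, \mathcal{A}_k$ partition $\mathcal{F}$; (ii) if $k > \frac{|\mathcal{F}|}{l(\mathcal{F},t)}$, then $\mathcal{A}_1 = \dots = \mathcal{A}_k = \mathcal{L}$ for some largest $t$-intersecting sub-family $\mathcal{L}$ of $\mathcal{F}$.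
   Context: All sets and families are finite. A family $\mathcal{A}$ is $t$-intersecting if $|A \cap B| \geq t$ for all $A, B \in \mathcal{A}$ with $A \neq B$. Families $\mathcal{A}_1, \dots, \mathcal{A}_k$ (not necessarily distinct or non-empty) are cross-$t$-intersecting if for all $i \neq j$, $|A \cap B| \geq t$ for every $A \in \mathcal{A}_i$, $B \in \mathcal{A}_j$. For non-empty $\mathcal{F}$: $\alpha(\mathcal{F}) = \max\{|F| : F \in \mathcal{F}\}$; $l(\mathcal{F},t)$ is the size of a largest $t$-intersecting sub-family of $\mathcal{F}$. For a family $\mathcal{A}$, $\mathcal{A}^{t,+} = \{A \in \mathcal{A} : |A \cap B| \geq t \text{ for all } B \in \mathcal{A}\setminus\{A\}\}$ and $\mathcal{A}^{t,-} = \mathcal{A} \setminus \mathcal{A}^{t,+}$. For $\mathcal{A} \subseteq \mathcal{F}$, $\beta(\mathcal{F},t,\mathcal{A}) = \frac{l(\mathcal{F},t) - |\mathcal{A}^{t,+}|}{|\mathcal{A}^{t,-}|}$ if $\mathcal{A}^{t,-} \neq \emptyset$, and $\frac{l(\mathcal{F},t)}{|\mathcal{F}|}$ otherwise; $\beta(\mathcal{F},t) = \min_{\mathcal{A} \subseteq \mathcal{F}} \beta(\mathcal{F},t,\mathcal{A})$. $[k] = \{1,\dots,k\}$. *)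

theory Defs
  imports Complex_Main
begin

definition t_intersecting :: "nat \<Rightarrow> 'a set set \<Rightarrow> bool" where
  "t_intersecting t \<A> \<longleftrightarrow> (\<forall>A\<in>\<A>. \<forall>B\<in>\<A>. A \<noteq> B \<longrightarrow> t \<le> card (A \<inter> B))"

definition cross_t_intersecting :: "nat \<Rightarrow> nat \<Rightarrow> (nat \<Rightarrow> 'a set set) \<Rightarrow> bool" where
  "cross_t_intersecting t k \<A> \<longleftrightarrow>
     (\<forall>i\<in>{1..k}. \<forall>j\<in>{1..k}. i \<noteq> j \<longrightarrow>
        (\<forall>A\<in>\<A> i. \<forall>B\<in>\<A> j. t \<le> card (A \<inter> B)))"

definition alpha :: "'a set set \<Rightarrow> nat" where
  "alpha \<F> = Max (card ` \<F>)"

definition lmax :: "'a set set \<Rightarrow> nat \<Rightarrow> nat" where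
  "lmax \<F> t = Max (card ` {\<S>. \<S> \<subseteq> \<F> \<and> t_intersecting t \<S>})"

definition plus_part :: "nat \<Rightarrow> 'a set set \<Rightarrow> 'a set set" where
  "plus_part t \<A> = {A \<in> \<A>. \<forall>B \<in> \<A> - {A}. t \<le> card (A \<inter> B)}"

definition minus_part :: "nat \<Rightarrow> 'a set set \<Rightarrow> 'a set set" where
  "minus_part t \<A> = \<A> - plus_part t \<A>"

definition beta_at :: "'a set set \<Rightarrow> nat \<Rightarrow> 'a set set \<Rightarrow> real" where
  "beta_at \<F> t \<A> =
     (if minus_part t \<A> \<noteq> {}
      then (real (lmax \<F> t) - real (card (plus_part t \<A>))) / real (card (minus_part t \<A>))
      else real (lmax \<F> t) / real (card \<F>))"

definition beta :: "'a set set \<Rightarrow> nat \<Rightarrow> real" where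
  "beta \<F> t = Min (beta_at \<F> t ` Pow \<F>)"

end

theory Submission imports Defs begin

lemma lmax_facts:
  assumes finF: "finite F"
  shows "S \<subseteq> F \<Longrightarrow> t_intersecting t S \<Longrightarrow> card S \<le> lmax F t"
    and "\<exists>S. S \<subseteq> F \<and> t_intersecting t S \<and> card S = lmax F t"
proof -
  let ?C = "{S. S \<subseteq> F \<and> t_intersecting t S}"
  have fin: "finite (card ` ?C)" using finF by (intro finite_imageI) (auto intro: finite_subset[of _ "Pow F"])
  have ne: "{} \<in> ?C" by (auto simp: t_intersecting_def)
  show "S \<subseteq> F \<Longrightarrow> t_intersecting t S \<Longrightarrow> card S \<le> lmax F t"
    unfolding lmax_def using fin by (intro Max_ge) auto
  have "lmax F t \<in> card ` ?C" unfolding lmax_def using fin ne by (intro Max_in) auto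
  then show "\<exists>S. S \<subseteq> F \<and> t_intersecting t S \<and> card S = lmax F t" by auto
qed

lemma lmax_pos:
  assumes "finite F" "F \<noteq> {}" shows "lmax F t \<ge> 1"
proof -
  obtain X where "X \<in> F" using assms by auto
  then have "card {X} \<le> lmax F t" using assms by (intro lmax_facts) (auto simp: t_intersecting_def)
  then show ?thesis by simp
qed

lemma beta_bound:
  assumes "finite F" "A \<subseteq> F" "minus_part t A \<noteq> {}" "beta F t = real (lmax F t) / real (card F)"
  shows "real (lmax F t) / real (card F) \<le> (real (lmax F t) - real (card (plus_part t A))) / real (card (minus_part t A))"
proof -
  have "beta F t \<le> beta_at F t A" unfolding beta_def using assms by (intro Min_le) auto
  then show ?thesis using assms by (simp add: beta_at_def)
qed

lemma sum_eq_each: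
  fixes f :: "nat \<Rightarrow> nat"
  assumes "finite I" "\<forall>i\<in>I. f i \<le> c" "(\<Sum>i\<in>I. f i) = card I * c" "j \<in> I"
  shows "f j = c"
proof (rule ccontr)
  assume "f j \<noteq> c" then have "f j < c" using assms by force
  have "(\<Sum>i\<in>I. f i) < (\<Sum>i\<in>I. c)"
    using assms \<open>f j < c\<close> by (intro sum_strict_mono_ex1) auto
  then show False using assms by simp
qed

theorem theorem4p1:
  fixes \<F> :: "'a set set" and t k :: nat and \<A> :: "nat \<Rightarrow> 'a set set"
  assumes t1: "t \<ge> 1" and k1: "k \<ge> 1"
    and finF: "finite \<F>" and finmem: "\<forall>X\<in>\<F>. finite X" and Fne: "\<F> \<noteq> {}"
    and alph: "alpha \<F> \<ge> t"
    and bet: "beta \<F> t = real (lmax \<F> t) / real (card \<F>)"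
    and sub: "\<forall>i\<in>{1..k}. \<A> i \<subseteq> \<F>"
    and cross: "cross_t_intersecting t k \<A>"
    and maxi: "\<forall>\<B> :: nat \<Rightarrow> 'a set set. (\<forall>i\<in>{1..k}. \<B> i \<subseteq> \<F>) \<and> cross_t_intersecting t k \<B>
                  \<longrightarrow> (\<Sum>i=1..k. card (\<B> i)) \<le> (\<Sum>i=1..k. card (\<A> i))"
  shows "(real k \<le> real (card \<F>) / real (lmax \<F> t) \<longrightarrow> (\<Sum>i=1..k. card (\<A> i)) = card \<F>)
       \<and> (real k \<ge> real (card \<F>) / real (lmax \<F> t) \<longrightarrow> (\<Sum>i=1..k. card (\<A> i)) = k * lmax \<F> t)
       \<and> (real k < real (card \<F>) / real (lmax \<F> t) \<longrightarrow>
            (\<forall>i\<in>{1..k}. \<A> i = minus_part t (\<A> i))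
          \<and> (\<forall>i\<in>{1..k}. \<forall>j\<in>{1..k}. i \<noteq> j \<longrightarrow> \<A> i \<inter> \<A> j = {})
          \<and> (\<Union>i\<in>{1..k}. \<A> i) = \<F>)
       \<and> (real k > real (card \<F>) / real (lmax \<F> t) \<longrightarrow>
            (\<exists>\<L>. \<L> \<subseteq> \<F> \<and> t_intersecting t \<L> \<and> card \<L> = lmax \<F> t \<and> (\<forall>i\<in>{1..k}. \<A> i = \<L>)))"
proof -
  define l where "l = lmax \<F> t"
  define n where "n = card \<F>"
  define s where "s = (\<Sum>i=1..k. card (\<A> i))"
  define A where "A = (\<Union>i\<in>{1..k}. \<A> i)"
  define P where "P = plus_part t A"
  define Q where "Q = minus_part t A"
  have l1: "l \<ge> 1" unfolding l_def using lmax_pos finF Fne by blast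
  have AF: "A \<subseteq> \<F>" using sub unfolding A_def by auto
  have finA: "finite A" using AF finF finite_subset by blast
  have PA: "P \<subseteq> A" unfolding P_def plus_part_def by auto
  have QPA: "Q = A - P" unfolding Q_def P_def minus_part_def by simp
  have finP: "finite P" using PA finA finite_subset by blast
  have finQ: "finite Q" using QPA finA by simp
  have cardA: "card A = card P + card Q"
  proof -
    have "A = P \<union> Q" "P \<inter> Q = {}" using QPA PA by auto
    then show ?thesis using card_Un_disjoint[OF finP finQ] by simp
  qed
  have crossD: "\<And>i j X Y. i \<in> {1..k} \<Longrightarrow> j \<in> {1..k} \<Longrightarrow> i \<noteq> j \<Longrightarrow> X \<in> \<A> i \<Longrightarrow> Y \<in> \<A> j \<Longrightarrow> t \<le> card (X \<inter> Y)"
    using cross unfolding cross_t_intersecting_def by blast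
  have multP: "X \<in> P" if "i \<in> {1..k}" "j \<in> {1..k}" "i \<noteq> j" "X \<in> \<A> i" "X \<in> \<A> j" for i j X
  proof -
    have "X \<in> A" using that unfolding A_def by auto
    moreover have "t \<le> card (X \<inter> Y)" if "Y \<in> A - {X}" for Y
    proof -
      obtain m where m: "m \<in> {1..k}" "Y \<in> \<A> m" using \<open>Y \<in> A - {X}\<close> unfolding A_def by blast
      show ?thesis
      proof (cases "m = i")
        case True
        then show ?thesis using crossD[of j m X Y] m \<open>j \<in> {1..k}\<close> \<open>i \<noteq> j\<close> \<open>X \<in> \<A> j\<close> by auto
      next
        case False
        then show ?thesis using crossD[of i m X Y] m \<open>i \<in> {1..k}\<close> \<open>X \<in> \<A> i\<close> by auto
      qed
    qed
    ultimately show ?thesis unfolding P_def plus_part_def by auto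
  qed
  have plusP: "X \<in> P" if "i \<in> {1..k}" "X \<in> plus_part t (\<A> i)" for i X
  proof -
    have X: "X \<in> \<A> i" "\<forall>B\<in>\<A> i - {X}. t \<le> card (X \<inter> B)" using that unfolding plus_part_def by auto
    have "X \<in> A" using that X unfolding A_def by auto
    moreover have "t \<le> card (X \<inter> Y)" if "Y \<in> A - {X}" for Y
    proof -
      obtain m where m: "m \<in> {1..k}" "Y \<in> \<A> m" using \<open>Y \<in> A - {X}\<close> unfolding A_def by blast
      show ?thesis
      proof (cases "m = i")
        case True
        then show ?thesis using X m \<open>Y \<in> A - {X}\<close> by auto
      next
        case False
        then show ?thesis using crossD[of i m X Y] m \<open>i \<in> {1..k}\<close> X by auto
      qed
    qed
    ultimately show ?thesis unfolding P_def plus_part_def by auto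
  qed
  have Pint: "t_intersecting t P"
    unfolding t_intersecting_def using PA unfolding P_def plus_part_def by auto
  have pl: "card P \<le> l" unfolding l_def using lmax_facts(1)[OF finF] Pint PA AF by auto
  have key: "s \<le> card Q + k * card P"
  proof -
    have "s = (\<Sum>i=1..k. card (\<A> i \<inter> Q) + card (\<A> i \<inter> P))"
      unfolding s_def
    proof (rule sum.cong[OF refl])
      fix i assume i: "i \<in> {1..k}"
      have "\<A> i = (\<A> i \<inter> Q) \<union> (\<A> i \<inter> P)" using i QPA PA unfolding A_def by auto
      moreover have "finite (\<A> i)" using i sub finF finite_subset by blast
      ultimately show "card (\<A> i) = card (\<A> i \<inter> Q) + card (\<A> i \<inter> P)"
        using card_Un_disjoint[of "\<A> i \<inter> Q" "\<A> i \<inter> P"] QPA by auto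
    qed
    also have "\<dots> = (\<Sum>i=1..k. card (\<A> i \<inter> Q)) + (\<Sum>i=1..k. card (\<A> i \<inter> P))"
      by (simp add: sum.distrib)
    also have "(\<Sum>i=1..k. card (\<A> i \<inter> Q)) = card (\<Union>i\<in>{1..k}. \<A> i \<inter> Q)"
      by (rule card_UN_disjoint[symmetric]) (use finQ QPA multP in auto)
    also have "(\<Union>i\<in>{1..k}. \<A> i \<inter> Q) = Q" using QPA unfolding A_def by auto
    also have "(\<Sum>i=1..k. card (\<A> i \<inter> P)) \<le> (\<Sum>i=1..k. card P)"
      by (rule sum_mono) (use finP in \<open>auto intro: card_mono\<close>)
    finally show ?thesis by simp
  qed
  have betaQ: "real l * real (card Q) \<le> real n * (real l - real (card P))" if "card Q > 0"
  proof -
    have "Q \<noteq> {}" using that by auto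
    then have b: "real l / real n \<le> (real l - real (card P)) / real (card Q)"
      using beta_bound[OF finF AF _ bet] unfolding l_def n_def Q_def P_def by auto
    have n0: "n > 0" unfolding n_def using finF Fne by (simp add: card_gt_0_iff)
    from b that n0 show ?thesis by (simp add: divide_simps mult.commute)
  qed
  have An: "card A \<le> n" unfolding n_def using AF finF card_mono by blast
  have sn: "n \<le> s"
  proof -
    define B where "B = (\<lambda>i::nat. if i = 1 then \<F> else {})"
    have "cross_t_intersecting t k B" unfolding cross_t_intersecting_def B_def by auto
    moreover have "\<forall>i\<in>{1..k}. B i \<subseteq> \<F>" unfolding B_def by auto
    ultimately have "(\<Sum>i=1..k. card (B i)) \<le> s" using maxi unfolding s_def by blast
    moreover have "(\<Sum>i=1..k. card (B i)) = n"
    proof -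
      have "(\<Sum>i=1..k. card (B i)) = (\<Sum>i\<in>{1..k}. if i = 1 then n else 0)"
        unfolding B_def n_def by (intro sum.cong) auto
      also have "\<dots> = n" using k1 by (simp add: sum.delta)
      finally show ?thesis .
    qed
    ultimately show ?thesis by simp
  qed
  have skl: "k * l \<le> s"
  proof -
    obtain L where L: "L \<subseteq> \<F>" "t_intersecting t L" "card L = l" "\<forall>X\<in>L. t \<le> card X"
    proof (cases "l \<ge> 2")
      case True
      obtain L where L: "L \<subseteq> \<F>" "t_intersecting t L" "card L = l"
        using lmax_facts(2)[OF finF] unfolding l_def by blast
      have "\<forall>X\<in>L. t \<le> card X"
      proof
        fix X assume X: "X \<in> L"
        have "\<not> L \<subseteq> {X}"
        proof
          assume "L \<subseteq> {X}"
          then have "card L \<le> card {X}" by (intro card_mono) auto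
          then show False using True L by simp
        qed
        then obtain Y where Y: "Y \<in> L" "Y \<noteq> X" by blast
        then have "t \<le> card (X \<inter> Y)" using L X unfolding t_intersecting_def by auto
        also have "\<dots> \<le> card X" using X L finmem by (intro card_mono) auto
        finally show "t \<le> card X" .
      qed
      then show ?thesis using L that by blast
    next
      case False
      then have "l = 1" using l1 by auto
      have "alpha \<F> \<in> card ` \<F>" unfolding alpha_def using finF Fne by (intro Max_in) auto
      then obtain X where X: "X \<in> \<F>" "card X = alpha \<F>" by auto
      show ?thesis
        by (rule that[of "{X}"]) (use X alph \<open>l = 1\<close> in \<open>auto simp: t_intersecting_def\<close>)
    qed
    define B where "B = (\<lambda>i::nat. L)"
    have "cross_t_intersecting t k B" unfolding cross_t_intersecting_def B_def
    proof (intro ballI impI)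
      fix i j X Y assume "X \<in> L" "Y \<in> L"
      show "t \<le> card (X \<inter> Y)"
      proof (cases "X = Y")
        case True then show ?thesis using L \<open>X \<in> L\<close> by auto
      next
        case False then show ?thesis using L \<open>X \<in> L\<close> \<open>Y \<in> L\<close> unfolding t_intersecting_def by auto
      qed
    qed
    moreover have "\<forall>i\<in>{1..k}. B i \<subseteq> \<F>" unfolding B_def using L by auto
    ultimately have "(\<Sum>i=1..k. card (B i)) \<le> s" using maxi unfolding s_def by blast
    then show ?thesis unfolding B_def using L by simp
  qed
  define p where "p = card P"
  define q where "q = card Q"
  have l0: "real l > 0" using l1 by simp
  have gen: "real l * real s \<le> real n * real l + real p * (real k * real l - real n)" if "q > 0"
  proof -
    have "real s \<le> real q + real k * real p" using key unfolding p_def q_def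
      by (metis of_nat_add of_nat_le_iff of_nat_mult)
    then have "real l * real s \<le> real l * (real q + real k * real p)"
      using l0 by (intro mult_left_mono) auto
    moreover have "real l * real q \<le> real n * (real l - real p)"
      using betaQ that unfolding p_def q_def by simp
    ultimately show ?thesis by (simp add: algebra_simps)
  qed
  have q0: "s \<le> k * p" if "q = 0" using key that unfolding p_def q_def by simp
  have kpl: "k * p \<le> k * l" using pl unfolding p_def by simp
  have dvd_conv: "(real k \<le> real n / real l) = (k * l \<le> n)"
    "(real k < real n / real l) = (k * l < n)"
    "(real k \<ge> real n / real l) = (k * l \<ge> n)"
    "(real k > real n / real l) = (k * l > n)"
    using l0 by (simp_all add: le_divide_eq less_divide_eq divide_le_eq divide_less_eq flip: of_nat_mult)
  have P1: "s = n" if "k * l \<le> n"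
  proof -
    have "s \<le> n"
    proof (cases "q = 0")
      case True then show ?thesis using q0 kpl that by linarith
    next
      case False
      have "real p * (real k * real l - real n) \<le> 0"
        using that by (intro mult_nonneg_nonpos) (auto simp flip: of_nat_mult)
      then have "real l * real s \<le> real l * real n" using gen False by (simp add: algebra_simps)
      then show ?thesis using l0 by simp
    qed
    then show ?thesis using sn by simp
  qed
  have P2: "s = k * l" if "k * l \<ge> n"
  proof -
    have "s \<le> k * l"
    proof (cases "q = 0")
      case True then show ?thesis using q0 kpl by linarith
    next
      case False
      have "real p * (real k * real l - real n) \<le> real l * (real k * real l - real n)"
        using that pl unfolding p_def by (intro mult_right_mono) (auto simp flip: of_nat_mult)
      then have "real l * real s \<le> real l * (real k * real l)" using gen False by (simp add: algebra_simps)
      then have "real s \<le> real k * real l" using l0 by simp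
      then show ?thesis by (simp flip: of_nat_mult)
    qed
    then show ?thesis using skl by simp
  qed
  have P3: "P = {} \<and> A = \<F>" if "k * l < n"
  proof -
    have "q > 0"
    proof (rule ccontr)
      assume "\<not> q > 0" then show False using q0 kpl that sn by simp
    qed
    have "real l * real n \<le> real l * real s" using sn l0 by (intro mult_left_mono) auto
    then have "real p * (real k * real l - real n) \<ge> 0"
      using gen[OF \<open>q > 0\<close>] by (simp add: algebra_simps)
    moreover have "real k * real l - real n < 0" using that by (simp flip: of_nat_mult)
    ultimately have "p = 0" by (simp add: zero_le_mult_iff)
    then have "P = {}" using finP unfolding p_def by simp
    have "s \<le> card A" using key cardA \<open>p = 0\<close> unfolding p_def by simp
    then have "card A = card \<F>" using An sn unfolding n_def by simp
    then have "A = \<F>" using card_subset_eq[OF finF AF] by simp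
    with \<open>P = {}\<close> show ?thesis by simp
  qed
  have P4: "Q = {} \<and> s = k * l" if "k * l > n"
  proof -
    have "q = 0"
    proof (rule ccontr)
      assume qn: "q \<noteq> 0"
      then have qp: "q > 0" by simp
      have "p \<noteq> l"
      proof
        assume "p = l"
        then have "real l * real q \<le> 0" using betaQ qp unfolding p_def q_def by simp
        then show False using l0 qp by (simp add: mult_le_0_iff)
      qed
      then have "p \<le> l - 1" using pl unfolding p_def by simp
      then have "real p \<le> real l - 1" using l1 by (simp add: of_nat_diff)
      then have "real p * (real k * real l - real n) \<le> (real l - 1) * (real k * real l - real n)"
        using that by (intro mult_right_mono) (auto simp flip: of_nat_mult)
      then have g: "real l * real s \<le> real n * real l + (real l - 1) * (real k * real l - real n)"
        using gen[OF qp] by linarith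
      have e: "real n * real l + (real l - 1) * (real k * real l - real n) = real l * (real k * real l) - (real k * real l - real n)"
        by (simp add: algebra_simps)
      have "real k * real l - real n > 0" using that by (simp flip: of_nat_mult)
      then have "real l * real s < real l * (real k * real l)"
        using g e by linarith
      then have "real s < real k * real l" using l0 by simp
      then have "s < k * l" by (simp flip: of_nat_mult)
      then show False using skl by simp
    qed
    then show ?thesis using P2 that unfolding q_def using finQ by simp
  qed
  have R4: "\<exists>\<L>. \<L> \<subseteq> \<F> \<and> t_intersecting t \<L> \<and> card \<L> = l \<and> (\<forall>i\<in>{1..k}. \<A> i = \<L>)" if "k * l > n"
  proof -
    have Q0: "Q = {}" and ss: "s = k * l" using P4 that by auto
    have AP: "A = P" using Q0 QPA PA by auto
    have "s \<le> k * p" using q0 Q0 unfolding q_def by simp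
    then have "k * l \<le> k * p" using ss by simp
    then have "p = l" using pl k1 unfolding p_def by simp
    then have cA: "card A = l" using AP unfolding p_def by simp
    have each: "card (\<A> i) = l" if "i \<in> {1..k}" for i
    proof (rule sum_eq_each[of "{1..k}" "\<lambda>i. card (\<A> i)" l i])
      show "\<forall>i\<in>{1..k}. card (\<A> i) \<le> l"
      proof
        fix i assume i: "i \<in> {1..k}"
        have "\<A> i \<subseteq> A" unfolding A_def using i by auto
        then show "card (\<A> i) \<le> l" using card_mono[OF finA] cA by metis
      qed
      show "(\<Sum>i\<in>{1..k}. card (\<A> i)) = card {1..k} * l" using ss unfolding s_def by simp
    qed (use that in auto)
    have "\<A> i = A" if "i \<in> {1..k}" for i
    proof -
      have "\<A> i \<subseteq> A" unfolding A_def using that by auto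
      then show ?thesis using card_subset_eq[OF finA] each[OF that] cA by metis
    qed
    then show ?thesis using AF Pint AP cA by auto
  qed
  have R3: "(\<forall>i\<in>{1..k}. \<A> i = minus_part t (\<A> i))
          \<and> (\<forall>i\<in>{1..k}. \<forall>j\<in>{1..k}. i \<noteq> j \<longrightarrow> \<A> i \<inter> \<A> j = {})
          \<and> (\<Union>i\<in>{1..k}. \<A> i) = \<F>" if "k * l < n"
  proof -
    have P0: "P = {}" and AF': "A = \<F>" using P3 that by auto
    have "\<A> i = minus_part t (\<A> i)" if "i \<in> {1..k}" for i
      using plusP[OF that] P0 unfolding minus_part_def by auto
    moreover have "\<A> i \<inter> \<A> j = {}" if "i \<in> {1..k}" "j \<in> {1..k}" "i \<noteq> j" for i j
      using multP[OF that] P0 by auto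
    ultimately show ?thesis using AF' unfolding A_def by auto
  qed
  show ?thesis
    unfolding l_def[symmetric] n_def[symmetric] s_def[symmetric] dvd_conv
    using P1 P2 R3 R4 by auto
qed

end
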